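(* Let $a\in\mathrm{F}^\uparrow$ with $\mathrm{supp}(a)=(0,r)$, let $\alpha_0\in(0,r)\cap A$, set $\alpha_k=(\alpha_0)a^k$ ($k\in\mathbb Z$), and let $b\in\mathrm{F}^\uparrow$ with $\mathrm{supp}(b)=(\alpha_0,\alpha_1)$. Let $d$ be a generator of the (cyclic) centralizer of $b$ in $\mathrm{F}_{(\alpha_0,\alpha_1)}$. Then the centralizer of the set $\{a^{-k}ba^k\mid k\in\mathbb Z\}$ in $\mathrm{F}$ is the subgroup generated by $\{a^{-k}da^k\mid k\in\mathbb Z\}$.
   Context: Fix an admissible triple $(r,\Lambda,A)$: $r>0$, $\Lambda\le\mathbb R^*_+$ a nontrivial multiplicative subgroup, $A\subseteq\mathbb R$ an additive subgroup with $r\in A$ and $\Lambda A\subseteq A$. $\mathrm{F}=\mathrm{F}(r,\Lambda,A)$ is the group of homeomorphisms of $[0,r)$ that are piecewise affine with finitely many breakpoints, all slopes in $\Lambda$, breakpoints and their images in $A$; maps act on the right. $\mathrm{F}^\uparrow=\{x\in\mathrm{F}\mid(t)x\ge t\ \forall t\}$; $\mathrm{supp}(x)$ is the set of non-fixed points; $\mathrm{F}_S=\{x\in\mathrm{F}\mid\mathrm{supp}(x)\subseteq S\}$. *)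

theory Defs
  imports "HOL-Analysis.Analysis" "HOL-Algebra.Generated_Groups"
begin

definition admissible :: "real \<Rightarrow> real set \<Rightarrow> real set \<Rightarrow> bool" where
  "admissible r Lam A \<longleftrightarrow>
     r > 0 \<and>
     Lam \<subseteq> {0<..} \<and> 1 \<in> Lam \<and> (\<forall>x\<in>Lam. \<forall>y\<in>Lam. x * y \<in> Lam) \<and>
     (\<forall>x\<in>Lam. inverse x \<in> Lam) \<and> (\<exists>x\<in>Lam. x \<noteq> 1) \<and>
     0 \<in> A \<and> (\<forall>x\<in>A. \<forall>y\<in>A. x + y \<in> A) \<and> (\<forall>x\<in>A. - x \<in> A) \<and>
     r \<in> A \<and> (\<forall>l\<in>Lam. \<forall>x\<in>A. l * x \<in> A)"

text \<open>Elements of F(r,Lambda,A), as maps real => real that are the identity outside [0,r).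
  B is a finite set of (candidate) breakpoints in (0,r); between consecutive points of B
  the map is affine with slope in Lambda; breakpoints and their images lie in A.\<close>
definition inF :: "real \<Rightarrow> real set \<Rightarrow> real set \<Rightarrow> (real \<Rightarrow> real) \<Rightarrow> bool" where
  "inF r Lam A f \<longleftrightarrow>
     bij_betw f {0..<r} {0..<r} \<and> continuous_on {0..<r} f \<and>
     (\<forall>t. t \<notin> {0..<r} \<longrightarrow> f t = t) \<and>
     (\<exists>B. finite B \<and> B \<subseteq> {0<..<r} \<and> B \<subseteq> A \<and> f ` B \<subseteq> A \<and>
        (\<forall>s t. 0 \<le> s \<and> s < t \<and> t < r \<and> {s<..<t} \<inter> B = {} \<longrightarrow>
           (\<exists>l\<in>Lam. \<exists>c. \<forall>u\<in>{s..t}. f u = l * u + c)))"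

definition Fset :: "real \<Rightarrow> real set \<Rightarrow> real set \<Rightarrow> (real \<Rightarrow> real) set" where
  "Fset r Lam A = {f. inF r Lam A f}"

text \<open>The group F with right action: (t)(x y) = ((t)x)y, i.e. x \<otimes> y = y \<circ> x.\<close>
definition Fgrp :: "real \<Rightarrow> real set \<Rightarrow> real set \<Rightarrow> (real \<Rightarrow> real) monoid" where
  "Fgrp r Lam A = \<lparr>carrier = Fset r Lam A, monoid.mult = (\<lambda>x y. y \<circ> x), one = id\<rparr>"

definition supp :: "(real \<Rightarrow> real) \<Rightarrow> real set" where
  "supp x = {t. x t \<noteq> t}"

definition Fup :: "real \<Rightarrow> real set \<Rightarrow> real set \<Rightarrow> (real \<Rightarrow> real) set" where
  "Fup r Lam A = {x \<in> Fset r Lam A. \<forall>t\<in>{0..<r}. x t \<ge> t}"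

definition Fsupp :: "real \<Rightarrow> real set \<Rightarrow> real set \<Rightarrow> real set \<Rightarrow> (real \<Rightarrow> real) set" where
  "Fsupp r Lam A S = {x \<in> Fset r Lam A. supp x \<subseteq> S}"

definition centralizer_in :: "('a, 'b) monoid_scheme \<Rightarrow> 'a set \<Rightarrow> 'a set \<Rightarrow> 'a set" where
  "centralizer_in G H X = {x \<in> H. \<forall>y\<in>X. x \<otimes>\<^bsub>G\<^esub> y = y \<otimes>\<^bsub>G\<^esub> x}"

end

theory Submission
  imports Defs
begin

definition finv :: "real \<Rightarrow> (real \<Rightarrow> real) \<Rightarrow> real \<Rightarrow> real" where
  "finv r f = (\<lambda>t. if t \<in> {0..<r} then inv_into {0..<r} f t else t)"

definition restr :: "real \<Rightarrow> real \<Rightarrow> (real \<Rightarrow> real) \<Rightarrow> real \<Rightarrow> real" where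
  "restr p q f = (\<lambda>t. if t \<in> {p..q} then f t else t)"


lemma supp_conj:
  assumes "\<And>t. h (hi t) = t" "\<And>t. hi (h t) = t"
  shows "supp (h \<circ> y \<circ> hi) = h ` supp y"
proof -
  have "t \<in> supp (h \<circ> y \<circ> hi) \<longleftrightarrow> t \<in> h ` supp y" for t
  proof
    assume "t \<in> supp (h \<circ> y \<circ> hi)"
    then have "h (y (hi t)) \<noteq> t" unfolding supp_def by simp
    then have "y (hi t) \<noteq> hi t" using assms(1) by metis
    then have "hi t \<in> supp y" unfolding supp_def by simp
    then show "t \<in> h ` supp y" using assms(1)[of t] by (metis imageI)
  next
    assume "t \<in> h ` supp y"
    then obtain v where v: "v \<in> supp y" "t = h v" by auto
    then have "hi t = v" using assms(2) by simp
    moreover have "y v \<noteq> v" using v unfolding supp_def by simp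
    ultimately have "h (y (hi t)) \<noteq> t" using v(2) assms(2) by metis
    then show "t \<in> supp (h \<circ> y \<circ> hi)" unfolding supp_def by simp
  qed
  then show ?thesis by blast
qed

lemma inj_supp: "inj x \<Longrightarrow> t \<in> supp x \<Longrightarrow> x t \<in> supp x"
  unfolding supp_def by (auto dest: injD)

lemma disjoint_commute:
  assumes "inj x" "inj y" "supp x \<inter> supp y = {}"
  shows "x \<circ> y = y \<circ> x"
proof
  fix t
  show "(x \<circ> y) t = (y \<circ> x) t"
  proof (cases "t \<in> supp y")
    case True
    then have "t \<notin> supp x" "y t \<in> supp y" using assms inj_supp by auto
    then have "x t = t" "x (y t) = y t" using assms(3) unfolding supp_def by auto
    then show ?thesis by simp
  next
    case False
    then have yt: "y t = t" unfolding supp_def by auto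
    have "y (x t) = x t"
    proof (rule ccontr)
      assume "y (x t) \<noteq> x t"
      then have "x t \<in> supp y" unfolding supp_def by auto
      then have "x t \<notin> supp x" using assms(3) by auto
      then have "x (x t) = x t" unfolding supp_def by auto
      then have "x t = t" using injD[OF assms(1)] by metis
      then show False using \<open>x t \<in> supp y\<close> False by simp
    qed
    then show ?thesis using yt by simp
  qed
qed

lemma commute_supp:
  assumes "inj x" "x \<circ> g = g \<circ> x" "t \<in> supp g"
  shows "x t \<in> supp g"
proof -
  have "g (x t) = x (g t)" using assms(2) by (metis comp_apply)
  moreover have "x (g t) \<noteq> x t" using assms(1,3) unfolding supp_def by (auto dest: injD)
  ultimately show ?thesis unfolding supp_def by simp
qed

lemma commute_supp_inv:
  assumes "x \<circ> g = g \<circ> x" "x v = s" "s \<in> supp g"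
  shows "v \<in> supp g"
proof (rule ccontr)
  assume "v \<notin> supp g"
  then have "g v = v" unfolding supp_def by auto
  then have "g s = s" using assms(1,2) by (metis comp_apply)
  then show False using assms(3) unfolding supp_def by auto
qed

context group
begin

lemma cancel1: "c \<in> carrier G \<Longrightarrow> y \<in> carrier G \<Longrightarrow> c \<otimes> (inv c \<otimes> y) = y"
  by (simp add: m_assoc[symmetric])
lemma cancel2: "c \<in> carrier G \<Longrightarrow> y \<in> carrier G \<Longrightarrow> inv c \<otimes> (c \<otimes> y) = y"
  by (simp add: m_assoc[symmetric])

lemma conj_commute:
  assumes "c \<in> carrier G" "x \<in> carrier G" "y \<in> carrier G" "x \<otimes> y = y \<otimes> x"
  shows "(inv c \<otimes> x \<otimes> c) \<otimes> (inv c \<otimes> y \<otimes> c) = (inv c \<otimes> y \<otimes> c) \<otimes> (inv c \<otimes> x \<otimes> c)"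
proof -
  have "(inv c \<otimes> x \<otimes> c) \<otimes> (inv c \<otimes> y \<otimes> c) = inv c \<otimes> (x \<otimes> y) \<otimes> c"
    using assms(1-3) by (simp add: m_assoc cancel1 cancel2)
  also have "\<dots> = inv c \<otimes> (y \<otimes> x) \<otimes> c" by (simp only: assms(4))
  also have "\<dots> = (inv c \<otimes> y \<otimes> c) \<otimes> (inv c \<otimes> x \<otimes> c)"
    using assms(1-3) by (simp add: m_assoc cancel1 cancel2)
  finally show ?thesis .
qed

lemma conj_cancel:
  assumes "c \<in> carrier G" "y \<in> carrier G"
  shows "inv c \<otimes> (c \<otimes> y \<otimes> inv c) \<otimes> c = y" and "c \<otimes> (inv c \<otimes> y \<otimes> c) \<otimes> inv c = y"
  using assms by (simp_all add: m_assoc cancel1 cancel2)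

lemma conj_generate:
  assumes c: "c \<in> carrier G" and d: "d \<in> carrier G" and S: "S \<subseteq> carrier G"
    and hd: "inv c \<otimes> d \<otimes> c \<in> S"
    and w: "w \<in> generate G {d}"
  shows "inv c \<otimes> w \<otimes> c \<in> generate G S"
  using w
proof (induction rule: generate.induct)
  case one
  then show ?case using c generate.one[of G S] by simp
next
  case (incl h)
  then show ?case using hd generate.incl[of _ S G] by simp
next
  case (inv h)
  then have "inv c \<otimes> inv h \<otimes> c = inv (inv c \<otimes> h \<otimes> c)"
    using c d by (simp add: inv_mult_group m_assoc)
  then show ?case using generate.inv[OF hd] inv by simp
next
  case (eng h1 h2)
  have h1: "h1 \<in> carrier G" and h2: "h2 \<in> carrier G"
    using generate_in_carrier[of "{d}"] eng d by auto
  have "inv c \<otimes> (h1 \<otimes> h2) \<otimes> c = (inv c \<otimes> h1 \<otimes> c) \<otimes> (inv c \<otimes> h2 \<otimes> c)"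
    using c h1 h2 by (simp add: m_assoc cancel1 cancel2)
  then show ?case using generate.eng[OF eng.IH] by simp
qed

lemma centralizer_subgroup:
  assumes "X \<subseteq> carrier G"
  shows "subgroup (centralizer_in G (carrier G) X) G"
proof (rule subgroupI)
  show "centralizer_in G (carrier G) X \<subseteq> carrier G" unfolding centralizer_in_def by auto
  have "\<one> \<in> centralizer_in G (carrier G) X" unfolding centralizer_in_def using assms by auto
  then show "centralizer_in G (carrier G) X \<noteq> {}" by auto
  fix x y assume x: "x \<in> centralizer_in G (carrier G) X" and y: "y \<in> centralizer_in G (carrier G) X"
  have xc: "x \<in> carrier G" and xz: "\<And>z. z \<in> X \<Longrightarrow> x \<otimes> z = z \<otimes> x" using x unfolding centralizer_in_def by auto
  have yc: "y \<in> carrier G" and yz: "\<And>z. z \<in> X \<Longrightarrow> y \<otimes> z = z \<otimes> y" using y unfolding centralizer_in_def by auto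
  show "inv x \<in> centralizer_in G (carrier G) X"
    unfolding centralizer_in_def
  proof (intro CollectI conjI ballI)
    show "inv x \<in> carrier G" using xc by simp
    fix z assume z: "z \<in> X"
    then have zc: "z \<in> carrier G" using assms by auto
    have "inv x \<otimes> z = inv x \<otimes> z \<otimes> x \<otimes> inv x" using xc zc by (simp add: m_assoc)
    also have "\<dots> = inv x \<otimes> (x \<otimes> z) \<otimes> inv x" using xc zc xz[OF z] by (simp add: m_assoc)
    also have "\<dots> = z \<otimes> inv x" using xc zc by (simp add: m_assoc[symmetric])
    finally show "inv x \<otimes> z = z \<otimes> inv x" .
  qed
  show "x \<otimes> y \<in> centralizer_in G (carrier G) X"
    unfolding centralizer_in_def
  proof (intro CollectI conjI ballI)
    show "x \<otimes> y \<in> carrier G" using xc yc by simp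
    fix z assume z: "z \<in> X"
    then have zc: "z \<in> carrier G" using assms by auto
    have "x \<otimes> y \<otimes> z = x \<otimes> (z \<otimes> y)" using xc yc zc yz[OF z] by (simp add: m_assoc)
    also have "\<dots> = z \<otimes> (x \<otimes> y)" using xc yc zc xz[OF z] by (simp add: m_assoc[symmetric])
    finally show "x \<otimes> y \<otimes> z = z \<otimes> (x \<otimes> y)" .
  qed
qed

end

locale Fctx =
  fixes r :: real and Lam A :: "real set"
  assumes adm: "admissible r Lam A"
begin

lemma r_pos: "r > 0" using adm unfolding admissible_def by auto
lemma Lam_pos: "l \<in> Lam \<Longrightarrow> l > 0" using adm unfolding admissible_def by auto
lemma one_Lam: "1 \<in> Lam" using adm unfolding admissible_def by auto
lemma Lam_mult: "l \<in> Lam \<Longrightarrow> m \<in> Lam \<Longrightarrow> l * m \<in> Lam" using adm unfolding admissible_def by auto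
lemma Lam_inv: "l \<in> Lam \<Longrightarrow> inverse l \<in> Lam" using adm unfolding admissible_def by auto
lemma A0: "0 \<in> A" using adm unfolding admissible_def by auto
lemma A_add: "x \<in> A \<Longrightarrow> y \<in> A \<Longrightarrow> x + y \<in> A" using adm unfolding admissible_def by auto
lemma A_uminus: "x \<in> A \<Longrightarrow> - x \<in> A" using adm unfolding admissible_def by auto
lemma A_diff: "x \<in> A \<Longrightarrow> y \<in> A \<Longrightarrow> x - y \<in> A" using A_add A_uminus by (metis diff_conv_add_uminus)
lemma LamA: "l \<in> Lam \<Longrightarrow> x \<in> A \<Longrightarrow> l * x \<in> A" using adm unfolding admissible_def by auto

abbreviation "inFF f \<equiv> inF r Lam A f"

lemma inF_basic:
  assumes "inFF f"
  shows "bij_betw f {0..<r} {0..<r}" "continuous_on {0..<r} f" "\<And>t. t \<notin> {0..<r} \<Longrightarrow> f t = t"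
proof -
  have H: "bij_betw f {0..<r} {0..<r} \<and> continuous_on {0..<r} f \<and> (\<forall>t. t \<notin> {0..<r} \<longrightarrow> f t = t)"
    using assms unfolding inF_def by (elim conjE) (intro conjI)
  then show "bij_betw f {0..<r} {0..<r}" "continuous_on {0..<r} f" "\<And>t. t \<notin> {0..<r} \<Longrightarrow> f t = t"
    by blast+
qed

lemma inF_brk:
  assumes "inFF f"
  obtains B where "finite B" "B \<subseteq> {0<..<r}" "B \<subseteq> A" "f ` B \<subseteq> A"
    "\<And>s t. 0 \<le> s \<Longrightarrow> s < t \<Longrightarrow> t < r \<Longrightarrow> {s<..<t} \<inter> B = {} \<Longrightarrow>
           (\<exists>l\<in>Lam. \<exists>c. \<forall>u\<in>{s..t}. f u = l * u + c)"
proof -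
  have "\<exists>B. finite B \<and> B \<subseteq> {0<..<r} \<and> B \<subseteq> A \<and> f ` B \<subseteq> A \<and>
        (\<forall>s t. 0 \<le> s \<and> s < t \<and> t < r \<and> {s<..<t} \<inter> B = {} \<longrightarrow>
           (\<exists>l\<in>Lam. \<exists>c. \<forall>u\<in>{s..t}. f u = l * u + c))"
    using assms unfolding inF_def by (elim conjE)
  then obtain B where B: "finite B \<and> B \<subseteq> {0<..<r} \<and> B \<subseteq> A \<and> f ` B \<subseteq> A \<and>
        (\<forall>s t. 0 \<le> s \<and> s < t \<and> t < r \<and> {s<..<t} \<inter> B = {} \<longrightarrow>
           (\<exists>l\<in>Lam. \<exists>c. \<forall>u\<in>{s..t}. f u = l * u + c))" by (elim exE)
  from B have B1: "finite B" and B2: "B \<subseteq> {0<..<r}" and B3: "B \<subseteq> A" and B4: "f ` B \<subseteq> A"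
    and B5: "\<forall>s t. 0 \<le> s \<and> s < t \<and> t < r \<and> {s<..<t} \<inter> B = {} \<longrightarrow>
           (\<exists>l\<in>Lam. \<exists>c. \<forall>u\<in>{s..t}. f u = l * u + c)" by blast+
  show ?thesis by (rule that[OF B1 B2 B3 B4]) (use B5 in blast)
qed

lemma inF_zero_mono:
  assumes "inFF f"
  shows "f 0 = 0" and "\<And>u v. 0 \<le> u \<Longrightarrow> u < v \<Longrightarrow> v < r \<Longrightarrow> f u < f v"
proof -
  have bij: "bij_betw f {0..<r} {0..<r}" and cont: "continuous_on {0..<r} f"
    using inF_basic[OF assms] by auto
  have inj: "inj_on f {0..<r}" using bij_betw_imp_inj_on[OF bij] .
  have img: "f ` {0..<r} = {0..<r}" using bij_betw_imp_surj_on[OF bij] .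
  have btw: "(f p < f x \<and> f x < f q) \<or> (f q < f x \<and> f x < f p)"
    if "0 \<le> p" "p < x" "x < q" "q < r" for p x q
  proof (rule continuous_inj_imp_mono[OF that(2,3)])
    have "{p..q} \<subseteq> {0..<r}" using that by auto
    thus "continuous_on {p..q} f" using continuous_on_subset[OF cont] by blast
    show "inj_on f {p..q}" using inj_on_subset[OF inj] \<open>{p..q} \<subseteq> {0..<r}\<close> by blast
  qed
  have rng: "t \<in> {0..<r} \<Longrightarrow> f t \<in> {0..<r}" for t using img by auto
  have "(0::real) \<in> {0..<r}" using r_pos by auto
  then obtain z where z: "z \<in> {0..<r}" "f z = 0" using img by (metis imageE)
  show f0: "f 0 = 0"
  proof (rule ccontr)
    assume "f 0 \<noteq> 0"
    then have "z > 0" using z by (cases "z = 0") auto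
    then have "(f 0 < f z \<and> f z < f ((z+r)/2)) \<or> (f ((z+r)/2) < f z \<and> f z < f 0)"
      using btw[of 0 z "(z+r)/2"] z by auto
    moreover have "f 0 \<ge> 0" "f ((z+r)/2) \<ge> 0" using rng[of 0] rng[of "(z+r)/2"] r_pos z by auto
    ultimately show False using z by auto
  qed
  show "f u < f v" if "0 \<le> u" "u < v" "v < r" for u v
  proof (cases "u = 0")
    case True
    have "f v \<noteq> f 0" using inj that inj_on_eq_iff[OF inj, of v 0] r_pos by auto
    moreover have "f v \<ge> 0" using rng[of v] that by auto
    ultimately show ?thesis using True f0 by auto
  next
    case False
    then have "(f 0 < f u \<and> f u < f v) \<or> (f v < f u \<and> f u < f 0)"
      using btw[of 0 u v] that by auto
    moreover have "f v \<ge> 0" using rng[of v] that by auto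
    ultimately show ?thesis using f0 by auto
  qed
qed

lemma inF_le_iff:
  assumes "inFF f" "0 \<le> u" "u < r" "0 \<le> v" "v < r"
  shows "f u \<le> f v \<longleftrightarrow> u \<le> v" and "f u < f v \<longleftrightarrow> u < v"
proof -
  have m: "\<And>u v. 0 \<le> u \<Longrightarrow> u < v \<Longrightarrow> v < r \<Longrightarrow> f u < f v" using inF_zero_mono(2)[OF assms(1)] by blast
  show "f u \<le> f v \<longleftrightarrow> u \<le> v" using m[of u v] m[of v u] assms by (cases u v rule: linorder_cases) auto
  show "f u < f v \<longleftrightarrow> u < v" using m[of u v] m[of v u] assms by (cases u v rule: linorder_cases) auto
qed

lemma inF_range: "inFF f \<Longrightarrow> t \<in> {0..<r} \<Longrightarrow> f t \<in> {0..<r}"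
  using inF_basic(1) by (metis bij_betwE)

lemma inF_finv:
  assumes "inFF f"
  shows "f (finv r f t) = t" "finv r f (f t) = t"
    "t \<in> {0..<r} \<Longrightarrow> finv r f t \<in> {0..<r}"
proof -
  have bij: "bij_betw f {0..<r} {0..<r}" using inF_basic[OF assms] by auto
  have inj: "inj_on f {0..<r}" using bij_betw_imp_inj_on[OF bij] .
  have img: "f ` {0..<r} = {0..<r}" using bij_betw_imp_surj_on[OF bij] .
  show "f (finv r f t) = t"
    unfolding finv_def using img f_inv_into_f[of t f "{0..<r}"] inF_basic(3)[OF assms] by auto
  show "finv r f (f t) = t"
  proof (cases "t \<in> {0..<r}")
    case True then show ?thesis unfolding finv_def using inv_into_f_f[OF inj] inF_range[OF assms] by auto
  next
    case False then show ?thesis unfolding finv_def using inF_basic(3)[OF assms] by auto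
  qed
  show "t \<in> {0..<r} \<Longrightarrow> finv r f t \<in> {0..<r}"
    unfolding finv_def using img inv_into_into[of t f "{0..<r}"] by auto
qed

lemma inF_inj: "inFF f \<Longrightarrow> inj f"
  by (metis inF_finv(2) injI)

lemma inF_A:
  assumes "inFF f" "u \<in> {0..<r}"
  shows "u \<in> A \<longleftrightarrow> f u \<in> A"
proof -
  obtain B where B: "finite B" "B \<subseteq> {0<..<r}" "B \<subseteq> A" "f ` B \<subseteq> A"
    "\<And>s t. 0 \<le> s \<Longrightarrow> s < t \<Longrightarrow> t < r \<Longrightarrow> {s<..<t} \<inter> B = {} \<Longrightarrow>
           (\<exists>l\<in>Lam. \<exists>c. \<forall>u\<in>{s..t}. f u = l * u + c)"
    using inF_brk[OF assms(1)] by metis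
  define S where "S = {0} \<union> {\<beta>\<in>B. \<beta> \<le> u}"
  have fS: "finite S" "S \<noteq> {}" unfolding S_def using B(1) by auto
  define s where "s = Max S"
  have sS: "s \<in> S" unfolding s_def using fS by (rule Max_in)
  have Sge: "x \<in> S \<Longrightarrow> x \<le> s" for x unfolding s_def using fS(1) by (rule Max_ge)
  have s_le: "s \<le> u" using sS assms(2) unfolding S_def by auto
  have s_ge: "s \<ge> 0" using Sge[of 0] unfolding S_def by auto
  have s0B: "s = 0 \<or> s \<in> B" using sS unfolding S_def by auto
  have f0: "f 0 = 0" using inF_zero_mono(1)[OF assms(1)] .
  have sA: "s \<in> A" "f s \<in> A" using s0B B(3,4) A0 f0 by auto
  show ?thesis
  proof (cases "s = u")
    case True then show ?thesis using sA by auto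
  next
    case False
    then have su: "s < u" using s_le by auto
    have "{s<..<u} \<inter> B = {}"
    proof (rule ccontr)
      assume "{s<..<u} \<inter> B \<noteq> {}"
      then obtain \<beta> where "\<beta> \<in> B" "s < \<beta>" "\<beta> < u" by auto
      then have "\<beta> \<in> S" unfolding S_def by auto
      then have "\<beta> \<le> s" by (rule Sge)
      then show False using \<open>s < \<beta>\<close> by auto
    qed
    then obtain l c where lc: "l \<in> Lam" "\<forall>w\<in>{s..u}. f w = l * w + c"
      using B(5)[OF s_ge su] assms(2) by auto
    have eq: "f u - f s = l * (u - s)" using lc(2) su by (auto simp: algebra_simps)
    have lpos: "l > 0" using Lam_pos lc(1) by auto
    show ?thesis
    proof
      assume "u \<in> A"
      then have "l * (u - s) \<in> A" using LamA lc(1) A_diff sA by auto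
      then have "f s + l * (u - s) \<in> A" using A_add sA by auto
      moreover have "f s + l * (u - s) = f u" using eq by simp
      ultimately show "f u \<in> A" by simp
    next
      assume "f u \<in> A"
      then have "inverse l * (f u - f s) \<in> A" using LamA Lam_inv lc(1) A_diff sA by auto
      then have "s + inverse l * (f u - f s) \<in> A" using A_add sA by auto
      moreover have "s + inverse l * (f u - f s) = u" using eq lpos by (simp add: field_simps)
      ultimately show "u \<in> A" by simp
    qed
  qed
qed


lemma pw_cont:
  fixes g :: "real \<Rightarrow> real"
  assumes fin: "finite B"
    and aff: "\<And>s t. 0 \<le> s \<Longrightarrow> s < t \<Longrightarrow> t < r \<Longrightarrow> {s<..<t} \<inter> B = {} \<Longrightarrow>
               \<exists>l\<in>Lam. \<exists>c. \<forall>u\<in>{s..t}. g u = l * u + c"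
  shows "continuous_on {0..<r} g"
  unfolding continuous_on_iff
proof (intro ballI allI impI)
  fix u e :: real assume u: "u \<in> {0..<r}" and e: "e > 0"
  define T where "T = {(u+r)/2} \<union> {\<beta>\<in>B. u < \<beta>}"
  have fT: "finite T" "T \<noteq> {}" unfolding T_def using fin by auto
  define t where "t = Min T"
  have tT: "t \<in> T" unfolding t_def using fT by (rule Min_in)
  have Tle: "x \<in> T \<Longrightarrow> t \<le> x" for x unfolding t_def using fT(1) by (rule Min_le)
  have ut: "u < t" using tT u unfolding T_def by auto
  have tr: "t < r" using Tle[of "(u+r)/2"] u unfolding T_def by auto
  have "{u<..<t} \<inter> B = {}"
  proof (rule ccontr)
    assume "{u<..<t} \<inter> B \<noteq> {}"
    then obtain \<beta> where b: "\<beta> \<in> B" "u < \<beta>" "\<beta> < t" by auto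
    then have "\<beta> \<in> T" unfolding T_def by auto
    then have "t \<le> \<beta>" by (rule Tle)
    then show False using b by linarith
  qed
  then have "\<exists>l\<in>Lam. \<exists>c. \<forall>w\<in>{u..t}. g w = l * w + c"
    using aff[of u t] u ut tr by simp
  then obtain l2 c2 where l2: "l2 \<in> Lam" "\<forall>w\<in>{u..t}. g w = l2*w + c2" by blast
  have l2p: "l2 > 0" using Lam_pos l2(1) by auto
  obtain s l1 c1 where s: "s < u" "l1 > 0" "\<forall>w. s \<le> w \<and> w \<le> u \<and> 0 \<le> w \<longrightarrow> g w = l1*w + c1"
  proof (cases "u = 0")
    case True
    have W: "\<forall>w. -1 \<le> w \<and> w \<le> u \<and> 0 \<le> w \<longrightarrow> g w = 1*w + g 0"
    proof (intro allI impI)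
      fix w assume "-1 \<le> w \<and> w \<le> u \<and> 0 \<le> w"
      then have "w = 0" using True by linarith
      then show "g w = 1*w + g 0" by simp
    qed
    show ?thesis by (rule that[of "-1" 1 "g 0", OF _ _ W]) (use True in simp_all)
  next
    case False
    then have u0: "u > 0" using u by auto
    define S where "S = {0} \<union> {\<beta>\<in>B. \<beta> < u}"
    have fS: "finite S" "S \<noteq> {}" unfolding S_def using fin by auto
    define s where "s = Max S"
    have sS: "s \<in> S" unfolding s_def using fS by (rule Max_in)
    have Sge: "x \<in> S \<Longrightarrow> x \<le> s" for x unfolding s_def using fS(1) by (rule Max_ge)
    have su: "s < u" using sS u0 unfolding S_def by auto
    have s0: "0 \<le> s" using Sge[of 0] unfolding S_def by auto
    have "{s<..<u} \<inter> B = {}"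
    proof (rule ccontr)
      assume "{s<..<u} \<inter> B \<noteq> {}"
      then obtain \<beta> where b: "\<beta> \<in> B" "s < \<beta>" "\<beta> < u" by auto
      then have "\<beta> \<in> S" unfolding S_def by auto
      then have "\<beta> \<le> s" by (rule Sge)
      then show False using b by linarith
    qed
    then have "\<exists>l\<in>Lam. \<exists>c. \<forall>w\<in>{s..u}. g w = l * w + c"
      using aff[of s u] s0 su u by simp
    then obtain l c where lc: "l \<in> Lam" "\<forall>w\<in>{s..u}. g w = l*w + c" by blast
    have "\<forall>w. s \<le> w \<and> w \<le> u \<and> 0 \<le> w \<longrightarrow> g w = l*w + c" using lc(2) by simp
    then show ?thesis using that[of s l c] su Lam_pos[OF lc(1)] by blast
  qed
  define dd where "dd = min (t - u) (min (u - s) (min (e / l1) (e / l2)))"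
  have ddp: "dd > 0" unfolding dd_def using ut s e l2p by auto
  show "\<exists>d>0. \<forall>x'\<in>{0..<r}. dist x' u < d \<longrightarrow> dist (g x') (g u) < e"
  proof (intro exI conjI ballI impI)
    show "dd > 0" by (rule ddp)
    fix x' assume x': "x' \<in> {0..<r}" "dist x' u < dd"
    then have xd: "\<bar>x' - u\<bar> < dd" by (simp add: dist_real_def)
    show "dist (g x') (g u) < e"
    proof (cases "x' \<ge> u")
      case True
      have "x' \<le> t" using xd True unfolding dd_def by auto
      then have "g x' - g u = l2 * (x' - u)" using l2(2) True ut by (auto simp: algebra_simps)
      moreover have "\<bar>x' - u\<bar> < e / l2" using xd unfolding dd_def by auto
      then have "l2 * \<bar>x' - u\<bar> < e" using l2p by (simp add: field_simps)
      ultimately show ?thesis using l2p by (simp add: dist_real_def abs_mult)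
    next
      case False
      have "s \<le> x'" using xd False unfolding dd_def by auto
      then have "g x' - g u = l1 * (x' - u)" using s(3) False x' u by (auto simp: algebra_simps)
      moreover have "\<bar>x' - u\<bar> < e / l1" using xd unfolding dd_def by auto
      then have "l1 * \<bar>x' - u\<bar> < e" using s(2) by (simp add: field_simps)
      ultimately show ?thesis using s(2) by (simp add: dist_real_def abs_mult)
    qed
  qed
qed

lemma inF_intro:
  assumes "bij_betw f {0..<r} {0..<r}" "continuous_on {0..<r} f" "\<And>t. t \<notin> {0..<r} \<Longrightarrow> f t = t"
    "finite B" "B \<subseteq> {0<..<r}" "B \<subseteq> A" "f ` B \<subseteq> A"
    "\<And>s t. 0 \<le> s \<Longrightarrow> s < t \<Longrightarrow> t < r \<Longrightarrow> {s<..<t} \<inter> B = {} \<Longrightarrow>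
           (\<exists>l\<in>Lam. \<exists>c. \<forall>u\<in>{s..t}. f u = l * u + c)"
  shows "inFF f"
  unfolding inF_def
proof (intro conjI allI impI exI[of _ B])
  show "bij_betw f {0..<r} {0..<r}" "continuous_on {0..<r} f" "finite B" "B \<subseteq> {0<..<r}" "B \<subseteq> A" "f ` B \<subseteq> A"
    using assms by auto
  show "t \<notin> {0..<r} \<Longrightarrow> f t = t" for t using assms(3) by auto
  show "\<exists>l\<in>Lam. \<exists>c. \<forall>u\<in>{s..t}. f u = l * u + c" if "0 \<le> s \<and> s < t \<and> t < r \<and> {s<..<t} \<inter> B = {}" for s t
    using assms(8)[of s t] that by auto
qed

lemma inF_id: "inFF id"
proof (rule inF_intro[of _ "{}"])
  show "\<exists>l\<in>Lam. \<exists>c. \<forall>u\<in>{s..t}. id u = l * u + c" for s t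
    using one_Lam by (intro bexI[of _ 1] exI[of _ 0]) auto
qed (auto simp: bij_betw_id continuous_on_id)

lemma inF_pos: "inFF f \<Longrightarrow> t \<in> {0<..<r} \<Longrightarrow> f t \<in> {0<..<r}"
  using inF_zero_mono[of f] inF_range[of f t] by fastforce

lemma inF_comp:
  assumes f: "inFF f" and g: "inFF g"
  shows "inFF (g \<circ> f)"
proof -
  obtain Bf where Bf: "finite Bf" "Bf \<subseteq> {0<..<r}" "Bf \<subseteq> A" "f ` Bf \<subseteq> A"
    "\<And>s t. 0 \<le> s \<Longrightarrow> s < t \<Longrightarrow> t < r \<Longrightarrow> {s<..<t} \<inter> Bf = {} \<Longrightarrow>
           (\<exists>l\<in>Lam. \<exists>c. \<forall>u\<in>{s..t}. f u = l * u + c)"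
    using inF_brk[OF f] by metis
  obtain Bg where Bg: "finite Bg" "Bg \<subseteq> {0<..<r}" "Bg \<subseteq> A" "g ` Bg \<subseteq> A"
    "\<And>s t. 0 \<le> s \<Longrightarrow> s < t \<Longrightarrow> t < r \<Longrightarrow> {s<..<t} \<inter> Bg = {} \<Longrightarrow>
           (\<exists>l\<in>Lam. \<exists>c. \<forall>u\<in>{s..t}. g u = l * u + c)"
    using inF_brk[OF g] by metis
  define B where "B = Bf \<union> finv r f ` Bg"
  have imf: "f ` {0..<r} = {0..<r}" using bij_betw_imp_surj_on[OF inF_basic(1)[OF f]] .
  show ?thesis
  proof (rule inF_intro[of _ B])
    show "bij_betw (g \<circ> f) {0..<r} {0..<r}"
      by (rule bij_betw_trans[OF inF_basic(1)[OF f] inF_basic(1)[OF g]])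
    show "continuous_on {0..<r} (g \<circ> f)"
      by (rule continuous_on_compose) (use inF_basic(2)[OF f] inF_basic(2)[OF g] imf in auto)
    show "(g \<circ> f) t = t" if "t \<notin> {0..<r}" for t using inF_basic(3)[OF f that] inF_basic(3)[OF g that] by simp
    show "finite B" unfolding B_def using Bf(1) Bg(1) by auto
    have fv: "finv r f \<beta> \<in> {0<..<r}" "f (finv r f \<beta>) = \<beta>" if "\<beta> \<in> Bg" for \<beta>
    proof -
      have b: "\<beta> \<in> {0<..<r}" using Bg(2) that by auto
      then have "finv r f \<beta> \<in> {0..<r}" using inF_finv(3)[OF f] by auto
      moreover have "finv r f \<beta> \<noteq> 0" using inF_finv(1)[OF f, of \<beta>] inF_zero_mono(1)[OF f] b by auto
      ultimately show "finv r f \<beta> \<in> {0<..<r}" by auto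
      show "f (finv r f \<beta>) = \<beta>" by (rule inF_finv(1)[OF f])
    qed
    show "B \<subseteq> {0<..<r}" unfolding B_def using Bf(2) fv by auto
    show "B \<subseteq> A" unfolding B_def
    proof (intro Un_least image_subsetI)
      show "Bf \<subseteq> A" by (rule Bf(3))
      fix \<beta> assume b: "\<beta> \<in> Bg"
      then have "f (finv r f \<beta>) \<in> A" using fv(2) Bg(3) by auto
      then show "finv r f \<beta> \<in> A" using inF_A[OF f, of "finv r f \<beta>"] fv(1)[OF b] by auto
    qed
    show "(g \<circ> f) ` B \<subseteq> A" unfolding B_def
    proof (intro image_subsetI)
      fix x assume "x \<in> Bf \<union> finv r f ` Bg"
      then show "(g \<circ> f) x \<in> A"
      proof
        assume x: "x \<in> Bf"
        then have "f x \<in> A" "f x \<in> {0..<r}" using Bf(2,4) inF_range[OF f, of x] by auto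
        then show ?thesis using inF_A[OF g, of "f x"] by auto
      next
        assume "x \<in> finv r f ` Bg"
        then obtain \<beta> where "\<beta> \<in> Bg" "x = finv r f \<beta>" by auto
        then show ?thesis using fv(2) Bg(4) by auto
      qed
    qed
    fix s t assume st: "0 \<le> s" "s < t" "t < r" "{s<..<t} \<inter> B = {}"
    then have "{s<..<t} \<inter> Bf = {}" unfolding B_def by auto
    then obtain l1 c1 where l1: "l1 \<in> Lam" "\<forall>w\<in>{s..t}. f w = l1*w + c1" using Bf(5)[OF st(1-3)] by auto
    have fst: "f s < f t" using inF_zero_mono(2)[OF f] st by auto
    have fs0: "0 \<le> f s" and ftr: "f t < r" using inF_range[OF f, of s] inF_range[OF f, of t] st by auto
    have "{f s<..<f t} \<inter> Bg = {}"
    proof (rule ccontr)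
      assume "{f s<..<f t} \<inter> Bg \<noteq> {}"
      then obtain \<beta> where b: "\<beta> \<in> Bg" "f s < \<beta>" "\<beta> < f t" by auto
      define v where "v = finv r f \<beta>"
      have v: "v \<in> {0<..<r}" "f v = \<beta>" using fv b unfolding v_def by auto
      have "s < v" using inF_le_iff(2)[OF f, of s v] st v b by auto
      moreover have "v < t" using inF_le_iff(2)[OF f, of v t] st v b by auto
      moreover have "v \<in> B" unfolding B_def v_def using b by auto
      ultimately show False using st(4) by auto
    qed
    then obtain l2 c2 where l2: "l2 \<in> Lam" "\<forall>w\<in>{f s..f t}. g w = l2*w + c2" using Bg(5)[OF fs0 fst ftr] by auto
    show "\<exists>l\<in>Lam. \<exists>c. \<forall>u\<in>{s..t}. (g \<circ> f) u = l * u + c"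
    proof (intro bexI[of _ "l2*l1"] exI[of _ "l2*c1 + c2"] ballI)
      fix w assume w: "w \<in> {s..t}"
      have "f w \<in> {f s..f t}" using inF_le_iff(1)[OF f, of s w] inF_le_iff(1)[OF f, of w t] w st by auto
      then show "(g \<circ> f) w = l2 * l1 * w + (l2 * c1 + c2)" using l1(2) l2(2) w by (simp add: algebra_simps)
    qed (use Lam_mult l1 l2 in auto)
  qed
qed

lemma inF_finv_in:
  assumes f: "inFF f"
  shows "inFF (finv r f)"
proof -
  obtain Bf where Bf: "finite Bf" "Bf \<subseteq> {0<..<r}" "Bf \<subseteq> A" "f ` Bf \<subseteq> A"
    "\<And>s t. 0 \<le> s \<Longrightarrow> s < t \<Longrightarrow> t < r \<Longrightarrow> {s<..<t} \<inter> Bf = {} \<Longrightarrow>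
           (\<exists>l\<in>Lam. \<exists>c. \<forall>u\<in>{s..t}. f u = l * u + c)"
    using inF_brk[OF f] by metis
  define h where "h = finv r f"
  have hf: "h (f t) = t" "f (h t) = t" for t unfolding h_def using inF_finv[OF f] by auto
  have hr: "t \<in> {0..<r} \<Longrightarrow> h t \<in> {0..<r}" for t unfolding h_def using inF_finv(3)[OF f] by auto
  have aff: "\<exists>l\<in>Lam. \<exists>c. \<forall>u\<in>{s..t}. h u = l * u + c"
    if st: "0 \<le> s" "s < t" "t < r" "{s<..<t} \<inter> f ` Bf = {}" for s t
  proof -
    have s'r: "h s \<in> {0..<r}" "h t \<in> {0..<r}" using hr st by auto
    have s't: "h s < h t" using inF_le_iff(2)[OF f, of "h s" "h t"] s'r hf st by auto
    have "{h s<..<h t} \<inter> Bf = {}"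
    proof (rule ccontr)
      assume "{h s<..<h t} \<inter> Bf \<noteq> {}"
      then obtain \<beta> where b: "\<beta> \<in> Bf" "h s < \<beta>" "\<beta> < h t" by auto
      have br: "\<beta> \<in> {0..<r}" using b Bf(2) by auto
      have "s < f \<beta>" using inF_le_iff(2)[OF f, of "h s" \<beta>] s'r br b hf by auto
      moreover have "f \<beta> < t" using inF_le_iff(2)[OF f, of \<beta> "h t"] s'r br b hf by auto
      ultimately show False using st(4) b by auto
    qed
    then obtain l c where lc: "l \<in> Lam" "\<forall>w\<in>{h s..h t}. f w = l*w + c"
      using Bf(5)[of "h s" "h t"] s'r s't by auto
    have lp: "l > 0" using Lam_pos lc(1) by auto
    show ?thesis
    proof (intro bexI[of _ "inverse l"] exI[of _ "- c / l"] ballI)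
      fix w assume w: "w \<in> {s..t}"
      then have wr: "w \<in> {0..<r}" using st by auto
      have "h w \<in> {h s..h t}" using inF_le_iff(1)[OF f, of "h s" "h w"] inF_le_iff(1)[OF f, of "h w" "h t"]
          s'r hr[OF wr] hf w by auto
      then have "f (h w) = l * h w + c" using lc(2) by auto
      then have "w = l * h w + c" using hf by simp
      then show "h w = inverse l * w + - c / l" using lp by (simp add: field_simps)
    qed (use Lam_inv lc(1) in auto)
  qed
  have fB: "finite (f ` Bf)" using Bf(1) by auto
  show ?thesis unfolding h_def[symmetric]
  proof (rule inF_intro[of _ "f ` Bf"])
    show "bij_betw h {0..<r} {0..<r}"
      by (rule bij_betw_byWitness[where f'=f]) (use hf hr inF_range[OF f] in auto)
    show "continuous_on {0..<r} h" by (rule pw_cont[OF fB aff]) auto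
    show "h t = t" if "t \<notin> {0..<r}" for t using that unfolding h_def finv_def by auto
    show "finite (f ` Bf)" by (rule fB)
    show "f ` Bf \<subseteq> {0<..<r}" using Bf(2) inF_pos[OF f] by auto
    show "f ` Bf \<subseteq> A" by (rule Bf(4))
    show "h ` f ` Bf \<subseteq> A" using Bf(3) hf by auto
  qed (rule aff; auto)
qed

lemma Fgrp_carrier: "carrier (Fgrp r Lam A) = {f. inFF f}"
  unfolding Fgrp_def Fset_def by simp
lemma Fgrp_mult: "x \<otimes>\<^bsub>Fgrp r Lam A\<^esub> y = y \<circ> x"
  unfolding Fgrp_def by simp
lemma Fgrp_one: "\<one>\<^bsub>Fgrp r Lam A\<^esub> = id"
  unfolding Fgrp_def by simp

lemma Fgrp_group: "group (Fgrp r Lam A)"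
proof (rule groupI)
  show "x \<otimes>\<^bsub>Fgrp r Lam A\<^esub> y \<in> carrier (Fgrp r Lam A)"
    if "x \<in> carrier (Fgrp r Lam A)" "y \<in> carrier (Fgrp r Lam A)" for x y
    using that inF_comp unfolding Fgrp_carrier Fgrp_mult by auto
  show "\<one>\<^bsub>Fgrp r Lam A\<^esub> \<in> carrier (Fgrp r Lam A)" using inF_id unfolding Fgrp_carrier Fgrp_one by auto
  show "x \<otimes>\<^bsub>Fgrp r Lam A\<^esub> y \<otimes>\<^bsub>Fgrp r Lam A\<^esub> z = x \<otimes>\<^bsub>Fgrp r Lam A\<^esub> (y \<otimes>\<^bsub>Fgrp r Lam A\<^esub> z)" for x y z
    unfolding Fgrp_mult by (simp add: comp_assoc)
  show "\<one>\<^bsub>Fgrp r Lam A\<^esub> \<otimes>\<^bsub>Fgrp r Lam A\<^esub> x = x" for x unfolding Fgrp_mult Fgrp_one by simp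
  show "\<exists>y\<in>carrier (Fgrp r Lam A). y \<otimes>\<^bsub>Fgrp r Lam A\<^esub> x = \<one>\<^bsub>Fgrp r Lam A\<^esub>"
    if "x \<in> carrier (Fgrp r Lam A)" for x
  proof (intro bexI[of _ "finv r x"])
    have "inFF x" using that unfolding Fgrp_carrier by auto
    then show "finv r x \<otimes>\<^bsub>Fgrp r Lam A\<^esub> x = \<one>\<^bsub>Fgrp r Lam A\<^esub>"
      unfolding Fgrp_mult Fgrp_one using inF_finv(1) by (auto simp: fun_eq_iff)
    show "finv r x \<in> carrier (Fgrp r Lam A)" using inF_finv_in \<open>inFF x\<close> unfolding Fgrp_carrier by auto
  qed
qed

lemma Fgrp_inv: "x \<in> carrier (Fgrp r Lam A) \<Longrightarrow> inv\<^bsub>Fgrp r Lam A\<^esub> x = finv r x"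
  using group.inv_equality[OF Fgrp_group, of "finv r x" x] inF_finv(1)[of x] inF_finv_in[of x]
  unfolding Fgrp_carrier Fgrp_mult Fgrp_one by (auto simp: fun_eq_iff)


lemma inF_image_Ioo:
  assumes f: "inFF f" and pq: "0 \<le> p" "p < q" "q < r"
  shows "f ` {p<..<q} = {f p<..<f q}"
proof
  show "f ` {p<..<q} \<subseteq> {f p<..<f q}"
    using inF_zero_mono(2)[OF f] pq by auto
  show "{f p<..<f q} \<subseteq> f ` {p<..<q}"
  proof
    fix w assume w: "w \<in> {f p<..<f q}"
    have "f p \<ge> 0" "f q < r" using inF_range[OF f, of p] inF_range[OF f, of q] pq by auto
    then have wr: "w \<in> {0..<r}" using w by auto
    define v where "v = finv r f w"
    have v: "v \<in> {0..<r}" "f v = w" unfolding v_def using inF_finv[OF f] wr by auto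
    have "p < v" using inF_le_iff(2)[OF f, of p v] pq v w by auto
    moreover have "v < q" using inF_le_iff(2)[OF f, of v q] pq v w by auto
    ultimately show "w \<in> f ` {p<..<q}" using v by auto
  qed
qed

lemma inF_restr:
  assumes x: "inFF x" and pq: "0 < p" "p < q" "q < r" "p \<in> A" "q \<in> A" "x p = p" "x q = q"
  shows "inFF (restr p q x)"
proof -
  obtain Bx where Bx: "finite Bx" "Bx \<subseteq> {0<..<r}" "Bx \<subseteq> A" "x ` Bx \<subseteq> A"
    "\<And>s t. 0 \<le> s \<Longrightarrow> s < t \<Longrightarrow> t < r \<Longrightarrow> {s<..<t} \<inter> Bx = {} \<Longrightarrow>
           (\<exists>l\<in>Lam. \<exists>c. \<forall>u\<in>{s..t}. x u = l * u + c)"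
    using inF_brk[OF x] by metis
  define y where "y = restr p q x"
  define yi where "yi = restr p q (finv r x)"
  have xpq: "x t \<in> {p..q}" if "t \<in> {p..q}" for t
    using inF_le_iff(1)[OF x, of p t] inF_le_iff(1)[OF x, of t q] that pq by auto
  have fp: "finv r x p = p" "finv r x q = q" using inF_finv(2)[OF x, of p] inF_finv(2)[OF x, of q] pq by auto
  have fpq: "finv r x t \<in> {p..q}" if "t \<in> {p..q}" for t
  proof -
    have tr: "t \<in> {0..<r}" using that pq by auto
    have fr: "finv r x t \<in> {0..<r}" using inF_finv(3)[OF x tr] .
    have "x (finv r x t) = t" using inF_finv(1)[OF x] .
    then show ?thesis using inF_le_iff(1)[OF x, of p "finv r x t"] inF_le_iff(1)[OF x, of "finv r x t" q]
      that pq fr by auto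
  qed
  define B where "B = (Bx \<inter> {p<..<q}) \<union> {p, q}"
  have fB: "finite B" unfolding B_def using Bx(1) by auto
  have aff: "\<exists>l\<in>Lam. \<exists>c. \<forall>u\<in>{s..t}. y u = l * u + c"
    if st: "0 \<le> s" "s < t" "t < r" "{s<..<t} \<inter> B = {}" for s t
  proof -
    have idcase: "\<exists>l\<in>Lam. \<exists>c. \<forall>u\<in>{s..t}. y u = l * u + c" if "\<forall>u\<in>{s..t}. y u = u"
      using that one_Lam by (intro bexI[of _ 1] exI[of _ 0]) auto
    have pB: "p \<in> B" and qB: "q \<in> B" unfolding B_def by auto
    consider (le) "t \<le> p" | (ge) "q \<le> s" | (mid) "p \<le> s" "t \<le> q"
    proof -
      have "\<not> (s < p \<and> p < t)" using pB st(4) by auto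
      moreover have "\<not> (s < q \<and> q < t)" using qB st(4) by auto
      ultimately show ?thesis using that pq st(2) by linarith
    qed
    then show ?thesis
    proof cases
      case le
      have "\<forall>u\<in>{s..t}. y u = u"
      proof
        fix u assume u: "u \<in> {s..t}"
        show "y u = u"
        proof (cases "u \<in> {p..q}")
          case True
          then have "u = p" using le u by auto
          moreover have "y p = p" using pq unfolding y_def restr_def by simp
          ultimately show ?thesis by simp
        next
          case False then show ?thesis unfolding y_def restr_def by (rule if_not_P)
        qed
      qed
      then show ?thesis by (rule idcase)
    next
      case ge
      have "\<forall>u\<in>{s..t}. y u = u"
      proof
        fix u assume u: "u \<in> {s..t}"
        show "y u = u"
        proof (cases "u \<in> {p..q}")
          case True
          then have "u = q" using ge u by auto
          moreover have "y q = q" using pq unfolding y_def restr_def by simp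
          ultimately show ?thesis by simp
        next
          case False then show ?thesis unfolding y_def restr_def by (rule if_not_P)
        qed
      qed
      then show ?thesis by (rule idcase)
    next
      case mid
      have "{s<..<t} \<inter> Bx = {}" using st(4) mid unfolding B_def by auto
      then have "\<exists>l\<in>Lam. \<exists>c. \<forall>u\<in>{s..t}. x u = l * u + c" using Bx(5)[OF st(1-3)] by simp
      then obtain l c where lc: "l \<in> Lam" "\<forall>u\<in>{s..t}. x u = l * u + c" by blast
      have "\<forall>u\<in>{s..t}. y u = l * u + c"
      proof
        fix u assume u: "u \<in> {s..t}"
        then have "y u = x u" using mid unfolding y_def restr_def by auto
        also have "\<dots> = l * u + c" using lc(2) u by blast
        finally show "y u = l * u + c" .
      qed
      then show ?thesis using lc(1) by blast
    qed
  qed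
  show ?thesis unfolding y_def[symmetric]
  proof (rule inF_intro[of _ B])
    show "bij_betw y {0..<r} {0..<r}"
    proof (rule bij_betw_byWitness[where f'=yi])
      show "\<forall>a\<in>{0..<r}. yi (y a) = a"
        using xpq inF_finv(2)[OF x] unfolding y_def yi_def restr_def by auto
      show "\<forall>a\<in>{0..<r}. y (yi a) = a"
        using fpq inF_finv(1)[OF x] unfolding y_def yi_def restr_def by auto
      show "y ` {0..<r} \<subseteq> {0..<r}"
        using inF_range[OF x] unfolding y_def restr_def by auto
      show "yi ` {0..<r} \<subseteq> {0..<r}"
        using inF_finv(3)[OF x] unfolding yi_def restr_def by auto
    qed
    show "continuous_on {0..<r} y" by (rule pw_cont[OF fB aff]) auto
    show "y t = t" if "t \<notin> {0..<r}" for t using that pq unfolding y_def restr_def by auto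
    show "finite B" by (rule fB)
    show "B \<subseteq> {0<..<r}" unfolding B_def using Bx(2) pq by auto
    show "B \<subseteq> A" unfolding B_def using Bx(3) pq by auto
    show "y ` B \<subseteq> A" unfolding B_def y_def restr_def using Bx(4) pq by auto
  qed (rule aff; auto)
qed


abbreviation "GG \<equiv> Fgrp r Lam A"

lemma finite_subsingleton: "(\<And>j k. P j \<Longrightarrow> P k \<Longrightarrow> j = k) \<Longrightarrow> finite {k. P k}"
proof (cases "\<exists>k. P k")
  case True
  then obtain k0 where "P k0" by blast
  assume H: "\<And>j k. P j \<Longrightarrow> P k \<Longrightarrow> j = k"
  then have "{k. P k} \<subseteq> {k0}" using \<open>P k0\<close> by blast
  then show ?thesis using finite_subset by blast
next
  case False then show ?thesis by simp
qed

lemma main: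
  fixes a b d :: "real \<Rightarrow> real" and \<alpha>0 :: real
  assumes a_up: "a \<in> Fup r Lam A" and a_supp: "supp a = {0<..<r}"
    and al0: "\<alpha>0 \<in> {0<..<r} \<inter> A"
    and b_up: "b \<in> Fup r Lam A"
    and b_supp: "supp b = {\<alpha>0<..<a \<alpha>0}"
    and d_gen: "d \<in> centralizer_in GG (Fsupp r Lam A {\<alpha>0<..<a \<alpha>0}) {b}"
    and d_generates: "generate GG {d} = centralizer_in GG (Fsupp r Lam A {\<alpha>0<..<a \<alpha>0}) {b}"
  shows "centralizer_in GG (carrier GG)
           {inv\<^bsub>GG\<^esub> (a [^]\<^bsub>GG\<^esub> k) \<otimes>\<^bsub>GG\<^esub> b \<otimes>\<^bsub>GG\<^esub> (a [^]\<^bsub>GG\<^esub> k) | k :: int. True}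
       = generate GG
           {inv\<^bsub>GG\<^esub> (a [^]\<^bsub>GG\<^esub> k) \<otimes>\<^bsub>GG\<^esub> d \<otimes>\<^bsub>GG\<^esub> (a [^]\<^bsub>GG\<^esub> k) | k :: int. True}"
proof -
  interpret G: group GG by (rule Fgrp_group)
  have carr: "f \<in> carrier GG \<longleftrightarrow> inFF f" for f by (simp add: Fgrp_carrier)
  have aF: "inFF a" and bF: "inFF b" using a_up b_up unfolding Fup_def Fset_def by auto
  have aC: "a \<in> carrier GG" and bC: "b \<in> carrier GG" using aF bF carr by auto
  have dF: "inFF d" and d_supp: "supp d \<subseteq> {\<alpha>0<..<a \<alpha>0}" and db: "d \<otimes>\<^bsub>GG\<^esub> b = b \<otimes>\<^bsub>GG\<^esub> d"
    using d_gen unfolding centralizer_in_def Fsupp_def Fset_def by auto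
  have dC: "d \<in> carrier GG" using dF carr by auto
  have al0': "0 < \<alpha>0" "\<alpha>0 < r" "\<alpha>0 \<in> A" using al0 by auto
  have a_gt: "a t > t" if "t \<in> {0<..<r}" for t
  proof -
    have "a t \<ge> t" using a_up that unfolding Fup_def by auto
    moreover have "t \<in> supp a" using a_supp that by simp
    then have "a t \<noteq> t" unfolding supp_def by simp
    ultimately show ?thesis by auto
  qed
  define cp where "cp k = a [^]\<^bsub>GG\<^esub> (k::int)" for k
  have cpC: "cp k \<in> carrier GG" for k unfolding cp_def using aC by simp
  have cpF: "inFF (cp k)" for k using cpC carr by auto
  have cp_succ: "cp (k+1) = a \<circ> cp k" for k
    using G.int_pow_mult[OF aC, of k 1] aC unfolding cp_def by (simp add: Fgrp_mult)
  have cp_succ': "cp k \<circ> a = cp (k+1)" for k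
    using G.int_pow_mult[OF aC, of 1 k] aC unfolding cp_def by (simp add: Fgrp_mult add.commute)
  define \<alpha> where "\<alpha> k = cp k \<alpha>0" for k
  have \<alpha>_succ: "\<alpha> (k+1) = a (\<alpha> k)" for k unfolding \<alpha>_def cp_succ by simp
  have cp_a: "cp k (a \<alpha>0) = \<alpha> (k+1)" for k unfolding \<alpha>_def cp_succ'[symmetric] by simp
  have \<alpha>_pos: "\<alpha> k \<in> {0<..<r}" for k unfolding \<alpha>_def using inF_pos[OF cpF] al0 by auto
  have \<alpha>A: "\<alpha> k \<in> A" for k unfolding \<alpha>_def using inF_A[OF cpF, of \<alpha>0] al0 by auto
  have \<alpha>_lt: "\<alpha> k < \<alpha> (k+1)" for k using a_gt[OF \<alpha>_pos[of k]] \<alpha>_succ by simp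
  have \<alpha>_mono0: "\<alpha> j < \<alpha> (j + 1 + int n)" for j n
  proof (induction n)
    case 0 then show ?case using \<alpha>_lt by simp
  next
    case (Suc n)
    have "\<alpha> (j + 1 + int n) < \<alpha> (j + 1 + int n + 1)" by (rule \<alpha>_lt)
    then show ?case using Suc by (simp add: add.assoc)
  qed
  have \<alpha>_mono: "\<alpha> j < \<alpha> k" if "j < k" for j k
  proof -
    have "k = j + 1 + int (nat (k - j - 1))" using that by simp
    then show ?thesis using \<alpha>_mono0[of j "nat (k - j - 1)"] by simp
  qed
  have \<alpha>_le: "\<alpha> j \<le> \<alpha> k" if "j \<le> k" for j k
    using \<alpha>_mono[of j k] that by (cases "j = k") auto
  have \<alpha>_less_iff: "\<alpha> j < \<alpha> k \<longleftrightarrow> j < k" for j k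
    using \<alpha>_mono[of j k] \<alpha>_le[of k j] by (cases "j < k") auto
  have a_cont: "continuous_on {0..<r} a" by (rule inF_basic(2)[OF aF])
  have up: "\<exists>n. t < \<alpha> n" if t: "t \<in> {0<..<r}" for t
  proof (rule ccontr)
    assume "\<not> (\<exists>n. t < \<alpha> n)"
    then have bd: "\<alpha> n \<le> t" for n by (simp add: not_less)
    define L where "L = Sup (range \<alpha>)"
    have bdd: "bdd_above (range \<alpha>)" using bd by (intro bdd_aboveI[where M=t]) auto
    have Lup: "\<alpha> n \<le> L" for n unfolding L_def using bdd by (auto intro: cSup_upper)
    have Lt: "L \<le> t" unfolding L_def using bd by (auto intro: cSup_least)
    have L0: "L > 0" using Lup[of 0] \<alpha>_pos[of 0] by auto
    have Lr: "L \<in> {0<..<r}" "L \<in> {0..<r}" using L0 Lt t by auto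
    define e where "e = a L - L"
    have e: "e > 0" unfolding e_def using a_gt[OF Lr(1)] by simp
    obtain \<delta> where \<delta>: "\<delta> > 0" "\<forall>x'\<in>{0..<r}. dist x' L < \<delta> \<longrightarrow> dist (a x') (a L) < e"
      using a_cont Lr(2) e unfolding continuous_on_iff by metis
    have "L - \<delta> < L" using \<delta> by simp
    then have "\<exists>x\<in>range \<alpha>. L - \<delta> < x"
      using less_cSup_iff[of "range \<alpha>" "L - \<delta>"] bdd unfolding L_def by auto
    then obtain k where k: "L - \<delta> < \<alpha> k" by auto
    have "dist (\<alpha> k) L < \<delta>" using k Lup[of k] by (simp add: dist_real_def)
    moreover have "\<alpha> k \<in> {0..<r}" using \<alpha>_pos[of k] by auto
    ultimately have "dist (a (\<alpha> k)) (a L) < e" using \<delta>(2) by blast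
    then have "a (\<alpha> k) > L" unfolding e_def dist_real_def by auto
    then show False using Lup[of "k+1"] \<alpha>_succ[of k] by simp
  qed
  have down: "\<exists>m. \<alpha> m < t" if t: "t \<in> {0<..<r}" for t
  proof (rule ccontr)
    assume "\<not> (\<exists>m. \<alpha> m < t)"
    then have bd: "t \<le> \<alpha> n" for n by (simp add: not_less)
    define L where "L = Inf (range \<alpha>)"
    have bdd: "bdd_below (range \<alpha>)" using bd by (intro bdd_belowI[where m=t]) auto
    have Llo: "L \<le> \<alpha> n" for n unfolding L_def using bdd by (auto intro: cInf_lower)
    have Lt: "t \<le> L" unfolding L_def using bd by (auto intro: cInf_greatest)
    have Lr: "L \<in> {0<..<r}" "L \<in> {0..<r}" using Llo[of 0] \<alpha>_pos[of 0] Lt t by auto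
    define e where "e = (a L - L) / 2"
    have e: "e > 0" unfolding e_def using a_gt[OF Lr(1)] by simp
    obtain \<delta> where \<delta>: "\<delta> > 0" "\<forall>x'\<in>{0..<r}. dist x' L < \<delta> \<longrightarrow> dist (a x') (a L) < e"
      using a_cont Lr(2) e unfolding continuous_on_iff by metis
    have "L < min (L + \<delta>) (L + e)" using \<delta> e by simp
    then have "\<exists>x\<in>range \<alpha>. x < min (L + \<delta>) (L + e)"
      using cInf_less_iff[of "range \<alpha>" "min (L + \<delta>) (L + e)"] bdd unfolding L_def by auto
    then obtain k where k: "\<alpha> k < min (L + \<delta>) (L + e)" by auto
    have km: "\<alpha> (k - 1) < \<alpha> k" using \<alpha>_lt[of "k-1"] by simp
    have "dist (\<alpha> (k-1)) L < \<delta>" using k km Llo[of "k-1"] by (simp add: dist_real_def)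
    moreover have "\<alpha> (k-1) \<in> {0..<r}" using \<alpha>_pos[of "k-1"] by auto
    ultimately have "dist (a (\<alpha> (k-1))) (a L) < e" using \<delta>(2) by blast
    moreover have "a (\<alpha> (k-1)) = \<alpha> k" using \<alpha>_succ[of "k-1"] by simp
    ultimately have "\<alpha> k > a L - e" unfolding dist_real_def by auto
    moreover have "\<alpha> k < L + e" using k by simp
    ultimately show False unfolding e_def by (simp add: field_simps)
  qed
  have find: "\<forall>m. \<alpha> m \<le> t \<longrightarrow> t < \<alpha> (m + int n) \<longrightarrow> (\<exists>k. \<alpha> k \<le> t \<and> t < \<alpha> (k+1))" for n t
  proof (induction n)
    case 0 then show ?case by auto
  next
    case (Suc n)
    show ?case
    proof (intro allI impI)
      fix m assume m: "\<alpha> m \<le> t" "t < \<alpha> (m + int (Suc n))"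
      show "\<exists>k. \<alpha> k \<le> t \<and> t < \<alpha> (k+1)"
      proof (cases "t < \<alpha> (m+1)")
        case True then show ?thesis using m by blast
      next
        case False
        then have "\<alpha> (m+1) \<le> t" by simp
        moreover have "t < \<alpha> (m + 1 + int n)" using m(2) by (simp add: add.assoc)
        ultimately show ?thesis using Suc.IH by blast
      qed
    qed
  qed
  have cover: "\<exists>k. \<alpha> k \<le> t \<and> t < \<alpha> (k+1)" if t: "t \<in> {0<..<r}" for t
  proof -
    obtain n where n: "t < \<alpha> n" using up[OF t] by blast
    obtain m where m: "\<alpha> m < t" using down[OF t] by blast
    have "m < n" using n m \<alpha>_less_iff[of m n] by auto
    then have "n = m + int (nat (n - m))" by simp
    then have "t < \<alpha> (m + int (nat (n - m)))" using n by simp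
    moreover have H: "\<alpha> m \<le> t \<longrightarrow> t < \<alpha> (m + int (nat (n - m))) \<longrightarrow> (\<exists>k. \<alpha> k \<le> t \<and> t < \<alpha> (k+1))"
      using find[of t "nat (n - m)"] by blast
    moreover have "\<alpha> m \<le> t" using m by simp
    ultimately show ?thesis by blast
  qed
  define g where "g k = inv\<^bsub>GG\<^esub> (cp k) \<otimes>\<^bsub>GG\<^esub> b \<otimes>\<^bsub>GG\<^esub> cp k" for k
  define h where "h k = inv\<^bsub>GG\<^esub> (cp k) \<otimes>\<^bsub>GG\<^esub> d \<otimes>\<^bsub>GG\<^esub> cp k" for k
  have setC: "{inv\<^bsub>GG\<^esub> (a [^]\<^bsub>GG\<^esub> k) \<otimes>\<^bsub>GG\<^esub> b \<otimes>\<^bsub>GG\<^esub> (a [^]\<^bsub>GG\<^esub> k) | k :: int. True} = range g"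
    unfolding g_def cp_def by auto
  have setD: "{inv\<^bsub>GG\<^esub> (a [^]\<^bsub>GG\<^esub> k) \<otimes>\<^bsub>GG\<^esub> d \<otimes>\<^bsub>GG\<^esub> (a [^]\<^bsub>GG\<^esub> k) | k :: int. True} = range h"
    unfolding h_def cp_def by auto
  have gC: "g k \<in> carrier GG" for k unfolding g_def using cpC bC by simp
  have hC: "h k \<in> carrier GG" for k unfolding h_def using cpC dC by simp
  have gF: "inFF (g k)" for k using gC carr by auto
  have hF: "inFF (h k)" for k using hC carr by auto
  have g_fun: "g k = cp k \<circ> b \<circ> finv r (cp k)" for k
    unfolding g_def using Fgrp_inv[OF cpC] by (simp add: Fgrp_mult comp_assoc)
  have h_fun: "h k = cp k \<circ> d \<circ> finv r (cp k)" for k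
    unfolding h_def using Fgrp_inv[OF cpC] by (simp add: Fgrp_mult comp_assoc)
  define I where "I k = {\<alpha> k<..<\<alpha> (k+1)}" for k
  have aa0: "a \<alpha>0 < r" "\<alpha>0 < a \<alpha>0" using inF_pos[OF aF, of \<alpha>0] al0 a_gt[of \<alpha>0] by auto
  have cpI: "cp k ` {\<alpha>0<..<a \<alpha>0} = I k" for k
    using inF_image_Ioo[OF cpF, of \<alpha>0 "a \<alpha>0" k] aa0 al0' unfolding I_def \<alpha>_def[symmetric] cp_a by simp
  have supp_g: "supp (g k) = I k" for k
    unfolding g_fun supp_conj[OF inF_finv(1)[OF cpF] inF_finv(2)[OF cpF]] b_supp cpI ..
  have supp_h: "supp (h k) \<subseteq> I k" for k
    unfolding h_fun supp_conj[OF inF_finv(1)[OF cpF] inF_finv(2)[OF cpF]] using d_supp cpI by blast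
  have I_disj: "t \<notin> {\<alpha> k..\<alpha> (k+1)}" if "j \<noteq> k" "t \<in> I j" for j k t
  proof (cases "j < k")
    case True
    then have "\<alpha> (j+1) \<le> \<alpha> k" using \<alpha>_le[of "j+1" k] by simp
    then show ?thesis using that(2) \<alpha>_lt[of k] unfolding I_def by auto
  next
    case False
    then have "\<alpha> (k+1) \<le> \<alpha> j" using \<alpha>_le[of "k+1" j] that(1) by simp
    then show ?thesis using that(2) unfolding I_def by auto
  qed
  have rgC: "range g \<subseteq> carrier GG" using gC by auto
  have rhC: "range h \<subseteq> carrier GG" using hC by auto
  define Cen where "Cen = centralizer_in GG (carrier GG) (range g)"
  have Cen_sub: "subgroup Cen GG" unfolding Cen_def by (rule G.centralizer_subgroup[OF rgC])
  have hCen: "h k \<in> Cen" for k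
    unfolding Cen_def centralizer_in_def
  proof (intro CollectI conjI ballI)
    show "h k \<in> carrier GG" by (rule hC)
    fix y assume "y \<in> range g"
    then obtain j where y: "y = g j" by auto
    show "h k \<otimes>\<^bsub>GG\<^esub> y = y \<otimes>\<^bsub>GG\<^esub> h k"
    proof (cases "j = k")
      case True
      show ?thesis unfolding y True h_def g_def by (rule G.conj_commute[OF cpC dC bC db])
    next
      case False
      have "supp (h k) \<inter> supp (g j) = {}"
        using supp_h[of k] supp_g[of j] I_disj[OF False] unfolding I_def by fastforce
      then have "h k \<circ> g j = g j \<circ> h k"
        by (rule disjoint_commute[OF inF_inj[OF hF] inF_inj[OF gF]])
      then show ?thesis unfolding y Fgrp_mult by simp
    qed
  qed
  have gen_sub: "generate GG (range h) \<subseteq> Cen"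
    by (rule G.generate_subgroup_incl[OF _ Cen_sub]) (use hCen in auto)
  have CenD: "inFF x" "g k \<circ> x = x \<circ> g k" "x \<in> carrier GG" if "x \<in> Cen" for x k
  proof -
    show "x \<in> carrier GG" using that unfolding Cen_def centralizer_in_def by auto
    then show "inFF x" using carr by auto
    have "x \<otimes>\<^bsub>GG\<^esub> g k = g k \<otimes>\<^bsub>GG\<^esub> x" using that unfolding Cen_def centralizer_in_def by auto
    then show "g k \<circ> x = x \<circ> g k" unfolding Fgrp_mult by simp
  qed
  have CenI: "x t \<in> I k" if "x \<in> Cen" "t \<in> I k" for x k t
  proof -
    have "x \<circ> g k = g k \<circ> x" using CenD(2)[OF that(1)] by simp
    then show ?thesis using commute_supp[OF inF_inj[OF CenD(1)[OF that(1)]]] that(2) supp_g by auto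
  qed
  have CenI': "finv r x t \<in> I k" if "x \<in> Cen" "t \<in> I k" for x k t
  proof -
    have "x \<circ> g k = g k \<circ> x" using CenD(2)[OF that(1)] by simp
    moreover have "x (finv r x t) = t" using inF_finv(1)[OF CenD(1)[OF that(1)]] .
    ultimately show ?thesis using commute_supp_inv[of x "g k" "finv r x t" t] that(2) supp_g by auto
  qed
  have fix\<alpha>: "x (\<alpha> k) = \<alpha> k" if xC: "x \<in> Cen" for x k
  proof -
    have xF: "inFF x" by (rule CenD(1)[OF xC])
    have ur: "\<alpha> k \<in> {0..<r}" using \<alpha>_pos[of k] by auto
    show ?thesis
    proof (rule ccontr)
      assume ne: "x (\<alpha> k) \<noteq> \<alpha> k"
      show False
      proof (cases "x (\<alpha> k) > \<alpha> k")
        case True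
        define m where "m = (\<alpha> k + min (x (\<alpha> k)) (\<alpha> (k+1))) / 2"
        have mI: "m \<in> I k" unfolding m_def I_def using True \<alpha>_lt[of k] by auto
        have mx: "m < x (\<alpha> k)" unfolding m_def using True \<alpha>_lt[of k] by auto
        define v where "v = finv r x m"
        have vI: "v \<in> I k" unfolding v_def by (rule CenI'[OF xC mI])
        have xv: "x v = m" unfolding v_def by (rule inF_finv(1)[OF xF])
        have "x (\<alpha> k) < x v" using inF_zero_mono(2)[OF xF, of "\<alpha> k" v] vI \<alpha>_pos[of k] \<alpha>_pos[of "k+1"]
          unfolding I_def by auto
        then show False using xv mx by simp
      next
        case False
        then have lt: "x (\<alpha> k) < \<alpha> k" using ne by simp
        define m where "m = (max (x (\<alpha> k)) (\<alpha> (k-1)) + \<alpha> k) / 2"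
        have ak: "\<alpha> (k - 1) < \<alpha> k" using \<alpha>_lt[of "k-1"] by simp
        have mI: "m \<in> I (k-1)" unfolding m_def I_def using lt ak by auto
        have mx: "x (\<alpha> k) < m" unfolding m_def using lt ak by auto
        define v where "v = finv r x m"
        have vI: "v \<in> I (k-1)" unfolding v_def by (rule CenI'[OF xC mI])
        have xv: "x v = m" unfolding v_def by (rule inF_finv(1)[OF xF])
        have "x v < x (\<alpha> k)" using inF_zero_mono(2)[OF xF, of v "\<alpha> k"] vI \<alpha>_pos[of k] \<alpha>_pos[of "k-1"]
          unfolding I_def by auto
        then show False using xv mx by simp
      qed
    qed
  qed
  define y where "y x k = restr (\<alpha> k) (\<alpha> (k+1)) x" for x k
  have yF: "inFF (y x k)" if xC: "x \<in> Cen" for x k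
    unfolding y_def
    by (rule inF_restr[OF CenD(1)[OF xC]]) (use \<alpha>_pos[of k] \<alpha>_pos[of "k+1"] \<alpha>_lt[of k] \<alpha>A fix\<alpha>[OF xC] in auto)
  have yC: "y x k \<in> carrier GG" if "x \<in> Cen" for x k using yF[OF that] carr by auto
  have y_in: "y x k t = x t" if "t \<in> {\<alpha> k..\<alpha> (k+1)}" for x k t using that unfolding y_def restr_def by (rule if_P)
  have y_out: "y x k t = t" if "t \<notin> {\<alpha> k..\<alpha> (k+1)}" for x k t using that unfolding y_def restr_def by (rule if_not_P)
  have supp_y: "supp (y x k) \<subseteq> I k" if xC: "x \<in> Cen" for x k
  proof
    fix t assume "t \<in> supp (y x k)"
    then have ne: "y x k t \<noteq> t" unfolding supp_def by simp
    then have tin: "t \<in> {\<alpha> k..\<alpha> (k+1)}" using y_out by blast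
    have "t \<noteq> \<alpha> k" using ne y_in[where t="\<alpha> k" and x=x and k=k] fix\<alpha>[OF xC, of k] \<alpha>_lt[of k] by auto
    moreover have "t \<noteq> \<alpha> (k+1)" using ne y_in[where t="\<alpha> (k+1)" and x=x and k=k] fix\<alpha>[OF xC, of "k+1"] \<alpha>_lt[of k] by auto
    ultimately show "t \<in> I k" using tin unfolding I_def by auto
  qed
  have yG: "y x k \<in> generate GG (range h)" if xC: "x \<in> Cen" for x k
  proof -
    have xF: "inFF x" by (rule CenD(1)[OF xC])
    have comm: "g k \<circ> y x k = y x k \<circ> g k"
    proof
      fix t
      show "(g k \<circ> y x k) t = (y x k \<circ> g k) t"
      proof (cases "t \<in> {\<alpha> k..\<alpha> (k+1)}")
        case True
        have gt: "g k t \<in> {\<alpha> k..\<alpha> (k+1)}"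
        proof (cases "t \<in> I k")
          case True
          then have "g k t \<in> supp (g k)" using inj_supp[OF inF_inj[OF gF]] supp_g by auto
          then show ?thesis using supp_g unfolding I_def by auto
        next
          case False
          then have "g k t = t" using supp_g[of k] unfolding supp_def by auto
          then show ?thesis using \<open>t \<in> {\<alpha> k..\<alpha> (k+1)}\<close> by simp
        qed
        have "(y x k \<circ> g k) t = x (g k t)" using y_in[OF gt] by simp
        also have "\<dots> = g k (x t)" using CenD(2)[OF xC, of k] by (metis comp_apply)
        also have "\<dots> = (g k \<circ> y x k) t" using y_in[OF True] by simp
        finally show ?thesis by simp
      next
        case False
        then have "t \<notin> I k" unfolding I_def by auto
        then have "g k t = t" using supp_g[of k] unfolding supp_def by auto
        then show ?thesis using y_out[OF False] by simp
      qed
    qed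
    then have commG: "y x k \<otimes>\<^bsub>GG\<^esub> g k = g k \<otimes>\<^bsub>GG\<^esub> y x k" unfolding Fgrp_mult by simp
    define z where "z = cp k \<otimes>\<^bsub>GG\<^esub> y x k \<otimes>\<^bsub>GG\<^esub> inv\<^bsub>GG\<^esub> (cp k)"
    have zC: "z \<in> carrier GG" unfolding z_def using cpC yC[OF xC] by simp
    have "(inv\<^bsub>GG\<^esub> (inv\<^bsub>GG\<^esub> (cp k)) \<otimes>\<^bsub>GG\<^esub> y x k \<otimes>\<^bsub>GG\<^esub> inv\<^bsub>GG\<^esub> (cp k)) \<otimes>\<^bsub>GG\<^esub>
          (inv\<^bsub>GG\<^esub> (inv\<^bsub>GG\<^esub> (cp k)) \<otimes>\<^bsub>GG\<^esub> g k \<otimes>\<^bsub>GG\<^esub> inv\<^bsub>GG\<^esub> (cp k)) =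
          (inv\<^bsub>GG\<^esub> (inv\<^bsub>GG\<^esub> (cp k)) \<otimes>\<^bsub>GG\<^esub> g k \<otimes>\<^bsub>GG\<^esub> inv\<^bsub>GG\<^esub> (cp k)) \<otimes>\<^bsub>GG\<^esub>
          (inv\<^bsub>GG\<^esub> (inv\<^bsub>GG\<^esub> (cp k)) \<otimes>\<^bsub>GG\<^esub> y x k \<otimes>\<^bsub>GG\<^esub> inv\<^bsub>GG\<^esub> (cp k))"
      by (rule G.conj_commute[OF G.inv_closed[OF cpC] yC[OF xC] gC commG])
    moreover have "cp k \<otimes>\<^bsub>GG\<^esub> g k \<otimes>\<^bsub>GG\<^esub> inv\<^bsub>GG\<^esub> (cp k) = b"
      unfolding g_def using G.conj_cancel(2)[OF cpC bC] .
    ultimately have zb: "z \<otimes>\<^bsub>GG\<^esub> b = b \<otimes>\<^bsub>GG\<^esub> z" unfolding z_def using cpC by simp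
    have z_fun: "z = finv r (cp k) \<circ> y x k \<circ> cp k"
      unfolding z_def using Fgrp_inv[OF cpC] by (simp add: Fgrp_mult comp_assoc)
    have "supp z = finv r (cp k) ` supp (y x k)"
      unfolding z_fun by (rule supp_conj[OF inF_finv(2)[OF cpF] inF_finv(1)[OF cpF]])
    also have "\<dots> \<subseteq> finv r (cp k) ` I k" using supp_y[OF xC] by auto
    also have "\<dots> = {\<alpha>0<..<a \<alpha>0}" unfolding cpI[symmetric] image_image inF_finv(2)[OF cpF] by simp
    finally have zsupp: "supp z \<subseteq> {\<alpha>0<..<a \<alpha>0}" .
    have "z \<in> centralizer_in GG (Fsupp r Lam A {\<alpha>0<..<a \<alpha>0}) {b}"
      unfolding centralizer_in_def Fsupp_def using zC zsupp zb by (simp add: Fgrp_carrier Fset_def)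
    then have zgen: "z \<in> generate GG {d}" using d_generates by simp
    have "inv\<^bsub>GG\<^esub> (cp k) \<otimes>\<^bsub>GG\<^esub> z \<otimes>\<^bsub>GG\<^esub> cp k \<in> generate GG (range h)"
      by (rule G.conj_generate[OF cpC dC rhC _ zgen]) (simp add: h_def)
    moreover have "inv\<^bsub>GG\<^esub> (cp k) \<otimes>\<^bsub>GG\<^esub> z \<otimes>\<^bsub>GG\<^esub> cp k = y x k"
      unfolding z_def by (rule G.conj_cancel(1)[OF cpC yC[OF xC]])
    ultimately show ?thesis by simp
  qed
  define K where "K x = {k. \<exists>t\<in>I k. x t \<noteq> t}" for x
  have Kfin: "finite (K x)" if xC: "x \<in> Cen" for x
  proof -
    have xF: "inFF x" by (rule CenD(1)[OF xC])
    obtain Bx where Bx: "finite Bx"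
      "\<And>s t. 0 \<le> s \<Longrightarrow> s < t \<Longrightarrow> t < r \<Longrightarrow> {s<..<t} \<inter> Bx = {} \<Longrightarrow>
           (\<exists>l\<in>Lam. \<exists>c. \<forall>u\<in>{s..t}. x u = l * u + c)"
      using inF_brk[OF xF] by metis
    have sub: "K x \<subseteq> (\<Union>\<beta>\<in>Bx. {k. \<beta> \<in> I k})"
    proof
      fix k assume kK: "k \<in> K x"
      show "k \<in> (\<Union>\<beta>\<in>Bx. {k. \<beta> \<in> I k})"
      proof (rule ccontr)
        assume "k \<notin> (\<Union>\<beta>\<in>Bx. {k. \<beta> \<in> I k})"
        then have "{\<alpha> k<..<\<alpha> (k+1)} \<inter> Bx = {}" unfolding I_def by auto
        then have "\<exists>l\<in>Lam. \<exists>c. \<forall>u\<in>{\<alpha> k..\<alpha> (k+1)}. x u = l * u + c"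
          using Bx(2)[of "\<alpha> k" "\<alpha> (k+1)"] \<alpha>_pos[of k] \<alpha>_pos[of "k+1"] \<alpha>_lt[of k] by simp
        then obtain l c where lc: "\<forall>u\<in>{\<alpha> k..\<alpha> (k+1)}. x u = l * u + c" by blast
        have e1: "l * \<alpha> k + c = \<alpha> k" using lc fix\<alpha>[OF xC, of k] \<alpha>_lt[of k] by force
        have e2: "l * \<alpha> (k+1) + c = \<alpha> (k+1)" using lc fix\<alpha>[OF xC, of "k+1"] \<alpha>_lt[of k] by force
        have "(l - 1) * (\<alpha> (k+1) - \<alpha> k) = 0" using e1 e2 by (simp add: algebra_simps)
        then have l1: "l = 1" using \<alpha>_lt[of k] by simp
        then have c0: "c = 0" using e1 by simp
        from kK obtain t where t: "t \<in> I k" "x t \<noteq> t" unfolding K_def by auto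
        have "x t = l * t + c" using lc t(1) unfolding I_def by auto
        then show False using t(2) l1 c0 by simp
      qed
    qed
    have "finite {k. \<beta> \<in> I k}" for \<beta>
    proof (rule finite_subsingleton)
      fix j k assume "\<beta> \<in> I j" "\<beta> \<in> I k"
      then show "j = k" using I_disj[of j k \<beta>] unfolding I_def by (cases "j = k") auto
    qed
    then show ?thesis using sub Bx(1) by (meson finite_UN_I finite_subset)
  qed
  have ind: "x \<in> generate GG (range h)" if "x \<in> Cen" "card (K x) = n" for n x
    using that
  proof (induction n arbitrary: x rule: less_induct)
    case (less n x)
    have xC: "x \<in> Cen" by (rule less.prems(1))
    have xF: "inFF x" by (rule CenD(1)[OF xC])
    show ?case
    proof (cases "K x = {}")
      case True
      have "x = id"
      proof
        fix t
        show "x t = id t"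
        proof (cases "t \<in> {0<..<r}")
          case True
          obtain k where k: "\<alpha> k \<le> t" "t < \<alpha> (k+1)" using cover[OF True] by blast
          show ?thesis
          proof (cases "t = \<alpha> k")
            case True then show ?thesis using fix\<alpha>[OF xC] by simp
          next
            case False
            then have "t \<in> I k" using k unfolding I_def by auto
            then show ?thesis using \<open>K x = {}\<close> unfolding K_def by auto
          qed
        next
          case False
          show ?thesis
          proof (cases "t = 0")
            case True then show ?thesis using inF_zero_mono(1)[OF xF] by simp
          next
            case False
            then have "t \<notin> {0..<r}" using \<open>t \<notin> {0<..<r}\<close> by auto
            then show ?thesis using inF_basic(3)[OF xF] by simp
          qed
        qed
      qed
      then show ?thesis using generate.one[of GG "range h"] by (simp only: Fgrp_one)
    next
      case False
      then obtain k where kK: "k \<in> K x" by blast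
      define yy where "yy = y x k"
      have yyC: "yy \<in> carrier GG" unfolding yy_def by (rule yC[OF xC])
      have yyF: "inFF yy" unfolding yy_def by (rule yF[OF xC])
      have yyG: "yy \<in> generate GG (range h)" unfolding yy_def by (rule yG[OF xC])
      have yyCen: "yy \<in> Cen" using yyG gen_sub by auto
      define x' where "x' = x \<otimes>\<^bsub>GG\<^esub> inv\<^bsub>GG\<^esub> yy"
      have x'Cen: "x' \<in> Cen" unfolding x'_def
        using subgroup.m_closed[OF Cen_sub xC subgroup.m_inv_closed[OF Cen_sub yyCen]] .
      have x'_fun: "x' t = finv r yy (x t)" for t
        unfolding x'_def using Fgrp_inv[OF yyC] by (simp add: Fgrp_mult)
      have Ksub: "K x' \<subseteq> K x - {k}"
      proof
        fix j assume "j \<in> K x'"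
        then obtain t where t: "t \<in> I j" "x' t \<noteq> t" unfolding K_def by auto
        show "j \<in> K x - {k}"
        proof (cases "j = k")
          case True
          then have "t \<in> {\<alpha> k..\<alpha> (k+1)}" using t(1) unfolding I_def by auto
          then have "yy t = x t" unfolding yy_def by (rule y_in)
          then have "x' t = t" using x'_fun inF_finv(2)[OF yyF, of t] by simp
          then show ?thesis using t(2) by simp
        next
          case False
          have tout: "t \<notin> {\<alpha> k..\<alpha> (k+1)}" by (rule I_disj[OF False t(1)])
          have "j \<in> K x"
          proof (rule ccontr)
            assume "j \<notin> K x"
            then have "x t = t" using t(1) unfolding K_def by auto
            moreover have "yy t = t" unfolding yy_def by (rule y_out[OF tout])
            ultimately have "x' t = t" using x'_fun inF_finv(2)[OF yyF, of t] by simp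
            then show False using t(2) by simp
          qed
          then show ?thesis using False by simp
        qed
      qed
      have "card (K x') < card (K x)"
      proof (rule psubset_card_mono[OF Kfin[OF xC]])
        show "K x' \<subset> K x" using Ksub kK by blast
      qed
      then have "card (K x') < n" using less.prems(2) by simp
      then have x'G: "x' \<in> generate GG (range h)" using less.IH[OF _ x'Cen refl] by blast
      have x'C: "x' \<in> carrier GG" using x'Cen CenD(3) by blast
      have xCC: "x \<in> carrier GG" by (rule CenD(3)[OF xC])
      have "x' \<otimes>\<^bsub>GG\<^esub> yy = x \<otimes>\<^bsub>GG\<^esub> (inv\<^bsub>GG\<^esub> yy \<otimes>\<^bsub>GG\<^esub> yy)"
        unfolding x'_def by (rule G.m_assoc[OF xCC G.inv_closed[OF yyC] yyC])
      also have "\<dots> = x" using G.l_inv[OF yyC] G.r_one[OF xCC] by simp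
      finally have "x' \<otimes>\<^bsub>GG\<^esub> yy = x" .
      then show ?thesis using generate.eng[OF x'G yyG] by simp
    qed
  qed
  have "Cen = generate GG (range h)"
  proof
    show "Cen \<subseteq> generate GG (range h)" using ind by blast
    show "generate GG (range h) \<subseteq> Cen" by (rule gen_sub)
  qed
  then show ?thesis unfolding setC setD Cen_def .
qed

end

theorem lemma4p6:
  fixes r :: real and Lam A :: "real set" and a b d :: "real \<Rightarrow> real" and \<alpha>0 :: real
  assumes adm: "admissible r Lam A"
    and a_up: "a \<in> Fup r Lam A" and a_supp: "supp a = {0<..<r}"
    and al0: "\<alpha>0 \<in> {0<..<r} \<inter> A"
    and b_up: "b \<in> Fup r Lam A"
    and b_supp: "supp b = {\<alpha>0<..<a \<alpha>0}"
    and d_gen: "d \<in> centralizer_in (Fgrp r Lam A) (Fsupp r Lam A {\<alpha>0<..<a \<alpha>0}) {b}"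
    and d_generates: "generate (Fgrp r Lam A) {d}
        = centralizer_in (Fgrp r Lam A) (Fsupp r Lam A {\<alpha>0<..<a \<alpha>0}) {b}"
  shows "centralizer_in (Fgrp r Lam A) (carrier (Fgrp r Lam A))
           {inv\<^bsub>Fgrp r Lam A\<^esub> (a [^]\<^bsub>Fgrp r Lam A\<^esub> k) \<otimes>\<^bsub>Fgrp r Lam A\<^esub> b
              \<otimes>\<^bsub>Fgrp r Lam A\<^esub> (a [^]\<^bsub>Fgrp r Lam A\<^esub> k) | k :: int. True}
       = generate (Fgrp r Lam A)
           {inv\<^bsub>Fgrp r Lam A\<^esub> (a [^]\<^bsub>Fgrp r Lam A\<^esub> k) \<otimes>\<^bsub>Fgrp r Lam A\<^esub> d
              \<otimes>\<^bsub>Fgrp r Lam A\<^esub> (a [^]\<^bsub>Fgrp r Lam A\<^esub> k) | k :: int. True}"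
proof -
  interpret Fctx r Lam A by (rule Fctx.intro[OF adm])
  show ?thesis by (rule main[OF a_up a_supp al0 b_up b_supp d_gen d_generates])
qed

end
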